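(* Let $(M^{2m},F,g)$ be a para-Kähler-Norden manifold, let $V$ be a unit parallel vector field on $M$, let $\alpha:M\to(0,\infty)$ be smooth with $(FV)(\alpha)=0$, and let $g^{\alpha}(X,Y)=\alpha\big(g(X,Y)+g(X,FV)g(Y,FV)\big)$. Then the tension field of the identity map $I:(M^{2m},g^{\alpha})\to(M^{2m},g)$ is $$\widetilde{\tau}(I)=\frac{m-1}{\alpha^{2}}\mathrm{grad}\,\alpha .$$
   Context: A para-Kähler-Norden manifold $(M^{2m},F,g)$: $M$ is a $2m$-dimensional smooth manifold, $F$ is a $(1,1)$-tensor field with $F^2=I$ whose eigenbundles for the eigenvalues $+1,-1$ have the same rank, $g$ is a Riemannian metric with $g(FX,Y)=g(X,FY)$, and $\nabla F=0$ for the Levi-Civita connection $\nabla$ of $g$. $V$ unit parallel means $g(V,V)=1$, $\nabla V=0$. $\mathrm{grad}\,\alpha$ is the $g$-gradient. The tension field of a smooth map $\phi:(M,g')\to(N,h)$ is $\tau(\phi)=\mathrm{Tr}_{g'}\nabla d\phi=\sum_i\big(\nabla^{\phi}_{e_i}d\phi(e_i)-d\phi(\nabla'_{e_i}e_i)\big)$ for a $g'$-orthonormal frame, $\nabla'$ the Levi-Civita connection of $g'$ and $\nabla^\phi$ the pull-back of the Levi-Civita connection of $h$. *)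

theory Defs
  imports "HOL-Analysis.Analysis"
begin

text \<open>Local (coordinate-chart) differential geometry on an open set U of real^'n.
  Points are x :: real^'n; a vector field is X :: real^'n => real^'n;
  a (1,1)-tensor field / metric is a matrix field real^'n => real^'n^'n,
  with F x $ k $ j = F^k_j and g x $ i $ j = g_ij.\<close>

definition pd :: "'n::finite \<Rightarrow> (real^'n \<Rightarrow> real) \<Rightarrow> real^'n \<Rightarrow> real" where
  "pd i f x = frechet_derivative f (at x) (axis i 1)"

coinductive smooth_fn :: "(real^'n::finite) set \<Rightarrow> (real^'n \<Rightarrow> real) \<Rightarrow> bool" where
  "(\<forall>x\<in>U. f differentiable (at x)) \<Longrightarrow> (\<forall>i. smooth_fn U (pd i f)) \<Longrightarrow> smooth_fn U f"

definition smooth_vf :: "(real^'n::finite) set \<Rightarrow> (real^'n \<Rightarrow> real^'n) \<Rightarrow> bool" where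
  "smooth_vf U X \<longleftrightarrow> (\<forall>k. smooth_fn U (\<lambda>y. X y $ k))"

definition smooth_tf :: "(real^'n::finite) set \<Rightarrow> (real^'n \<Rightarrow> real^'n^'n) \<Rightarrow> bool" where
  "smooth_tf U A \<longleftrightarrow> (\<forall>i j. smooth_fn U (\<lambda>y. A y $ i $ j))"

definition riem_metric :: "(real^'n::finite) set \<Rightarrow> (real^'n \<Rightarrow> real^'n^'n) \<Rightarrow> bool" where
  "riem_metric U g \<longleftrightarrow> open U \<and> smooth_tf U g \<and>
     (\<forall>x\<in>U. transpose (g x) = g x \<and> (\<forall>v. v \<noteq> 0 \<longrightarrow> v \<bullet> (g x *v v) > 0))"

definition christoffel :: "(real^'n::finite \<Rightarrow> real^'n^'n) \<Rightarrow> real^'n \<Rightarrow> 'n \<Rightarrow> 'n \<Rightarrow> 'n \<Rightarrow> real" where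
  "christoffel g x k i j = (1/2) * (\<Sum>l\<in>UNIV. matrix_inv (g x) $ k $ l *
      (pd i (\<lambda>y. g y $ j $ l) x + pd j (\<lambda>y. g y $ i $ l) x - pd l (\<lambda>y. g y $ i $ j) x))"

definition cov :: "(real^'n::finite \<Rightarrow> real^'n^'n) \<Rightarrow> (real^'n \<Rightarrow> real^'n) \<Rightarrow> (real^'n \<Rightarrow> real^'n) \<Rightarrow> real^'n \<Rightarrow> real^'n" where
  "cov g X Y x = (\<chi> k. (\<Sum>i\<in>UNIV. X x $ i * pd i (\<lambda>y. Y y $ k) x)
      + (\<Sum>i\<in>UNIV. \<Sum>j\<in>UNIV. christoffel g x k i j * X x $ i * Y x $ j))"

definition parallel_tf :: "(real^'n::finite) set \<Rightarrow> (real^'n \<Rightarrow> real^'n^'n) \<Rightarrow> (real^'n \<Rightarrow> real^'n^'n) \<Rightarrow> bool" where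
  "parallel_tf U g F \<longleftrightarrow> (\<forall>x\<in>U. \<forall>i k j. pd i (\<lambda>y. F y $ k $ j) x
      + (\<Sum>l\<in>UNIV. christoffel g x k i l * F x $ l $ j)
      - (\<Sum>l\<in>UNIV. christoffel g x l i j * F x $ k $ l) = 0)"

definition parallel_vf :: "(real^'n::finite) set \<Rightarrow> (real^'n \<Rightarrow> real^'n^'n) \<Rightarrow> (real^'n \<Rightarrow> real^'n) \<Rightarrow> bool" where
  "parallel_vf U g V \<longleftrightarrow> (\<forall>x\<in>U. \<forall>i. cov g (\<lambda>_. axis i 1) V x = 0)"

definition dir_deriv :: "(real^'n::finite \<Rightarrow> real^'n) \<Rightarrow> (real^'n \<Rightarrow> real) \<Rightarrow> real^'n \<Rightarrow> real" where
  "dir_deriv X f x = (\<Sum>i\<in>UNIV. X x $ i * pd i f x)"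

definition grad :: "(real^'n::finite \<Rightarrow> real^'n^'n) \<Rightarrow> (real^'n \<Rightarrow> real) \<Rightarrow> real^'n \<Rightarrow> real^'n" where
  "grad g f x = (\<chi> k. \<Sum>l\<in>UNIV. matrix_inv (g x) $ k $ l * pd l f x)"

definition para_kaehler_norden :: "nat \<Rightarrow> (real^'n::finite) set \<Rightarrow> (real^'n \<Rightarrow> real^'n^'n) \<Rightarrow> (real^'n \<Rightarrow> real^'n^'n) \<Rightarrow> bool" where
  "para_kaehler_norden m U F g \<longleftrightarrow> CARD('n) = 2 * m \<and> riem_metric U g \<and> smooth_tf U F \<and>
     (\<forall>x\<in>U. F x ** F x = mat 1 \<and>
        dim {v. F x *v v = v} = dim {v. F x *v v = - v} \<and>
        (\<forall>X Y. (F x *v X) \<bullet> (g x *v Y) = X \<bullet> (g x *v (F x *v Y)))) \<and>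
     parallel_tf U g F"

definition g_alpha :: "(real^'n::finite \<Rightarrow> real^'n^'n) \<Rightarrow> (real^'n \<Rightarrow> real^'n^'n) \<Rightarrow> (real^'n \<Rightarrow> real^'n) \<Rightarrow> (real^'n \<Rightarrow> real) \<Rightarrow> real^'n \<Rightarrow> real^'n^'n" where
  "g_alpha g F V \<alpha> x = \<alpha> x *\<^sub>R (g x + (\<chi> i j. (g x *v (F x *v V x)) $ i * (g x *v (F x *v V x)) $ j))"

definition dphi :: "(real^'n::finite \<Rightarrow> real^'n) \<Rightarrow> real^'n \<Rightarrow> real^'n \<Rightarrow> real^'n" where
  "dphi \<phi> x v = (\<chi> c. \<Sum>k\<in>UNIV. v $ k * pd k (\<lambda>y. \<phi> y $ c) x)"

definition cov_pull :: "(real^'n::finite \<Rightarrow> real^'n^'n) \<Rightarrow> (real^'n \<Rightarrow> real^'n) \<Rightarrow> (real^'n \<Rightarrow> real^'n) \<Rightarrow> (real^'n \<Rightarrow> real^'n) \<Rightarrow> real^'n \<Rightarrow> real^'n" where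
  "cov_pull h \<phi> X W x = (\<chi> c. (\<Sum>i\<in>UNIV. X x $ i * pd i (\<lambda>y. W y $ c) x)
      + (\<Sum>a\<in>UNIV. \<Sum>b\<in>UNIV. christoffel h (\<phi> x) c a b * dphi \<phi> x (X x) $ a * W x $ b))"

definition orthonormal_frame :: "(real^'n::finite) set \<Rightarrow> (real^'n \<Rightarrow> real^'n^'n) \<Rightarrow> ('n \<Rightarrow> real^'n \<Rightarrow> real^'n) \<Rightarrow> bool" where
  "orthonormal_frame U g e \<longleftrightarrow> (\<forall>i. smooth_vf U (e i)) \<and>
     (\<forall>x\<in>U. \<forall>i j. e i x \<bullet> (g x *v e j x) = (if i = j then 1 else 0))"

definition tension :: "(real^'n::finite \<Rightarrow> real^'n^'n) \<Rightarrow> (real^'n \<Rightarrow> real^'n^'n) \<Rightarrow> (real^'n \<Rightarrow> real^'n) \<Rightarrow> ('n \<Rightarrow> real^'n \<Rightarrow> real^'n) \<Rightarrow> real^'n \<Rightarrow> real^'n" where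
  "tension g' h \<phi> e x = (\<Sum>i\<in>UNIV. cov_pull h \<phi> (e i) (\<lambda>y. dphi \<phi> y (e i y)) x
      - dphi \<phi> x (cov g' (e i) (e i) x))"

end

theory Submission
  imports Defs
begin


lemma delta1: "(\<Sum>p\<in>(UNIV::'n::finite set). (if l = p then 1 else 0) * X p) = (X l::real)"
proof -
  have "(\<Sum>p\<in>(UNIV::'n::finite set). (if l = p then 1 else 0) * X p) = (\<Sum>p\<in>UNIV. if l = p then X p else 0)"
    by (rule sum.cong) auto
  then show ?thesis by simp
qed

lemma delta2: "(\<Sum>p\<in>(UNIV::'n::finite set). X p * (if p = l then 1 else 0)) = (X l::real)"
proof -
  have "(\<Sum>p\<in>(UNIV::'n::finite set). X p * (if p = l then 1 else 0)) = (\<Sum>p\<in>UNIV. if p = l then X p else 0)"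
    by (rule sum.cong) auto
  then show ?thesis by simp
qed

lemma swapR: "(\<Sum>j\<in>(UNIV::'n::finite set). (\<Sum>p\<in>(UNIV::'m::finite set). f j p) * (w j::real)) = (\<Sum>p\<in>UNIV. \<Sum>j\<in>UNIV. f j p * w j)"
  by (simp add: sum_distrib_right) (rule sum.swap)

lemma swapL: "(\<Sum>j\<in>(UNIV::'n::finite set). (w j::real) * (\<Sum>p\<in>(UNIV::'m::finite set). f j p)) = (\<Sum>p\<in>UNIV. \<Sum>j\<in>UNIV. w j * f j p)"
  by (simp add: sum_distrib_left) (rule sum.swap)

lemma lower:
  fixes A B :: "'n::finite \<Rightarrow> 'n \<Rightarrow> real"
  assumes "\<And>i j. (\<Sum>k\<in>UNIV. A i k * B k j) = (if i = j then 1 else 0)"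
  shows "(\<Sum>c\<in>UNIV. A l c * (\<Sum>p\<in>UNIV. B c p * X p)) = X l"
proof -
  have "(\<Sum>c\<in>UNIV. A l c * (\<Sum>p\<in>UNIV. B c p * X p)) = (\<Sum>p\<in>UNIV. \<Sum>c\<in>UNIV. A l c * (B c p * X p))"
    by (rule swapL)
  also have "\<dots> = (\<Sum>p\<in>UNIV. (\<Sum>c\<in>UNIV. A l c * B c p) * X p)"
    by (simp add: sum_distrib_right mult.assoc)
  also have "\<dots> = (\<Sum>p\<in>UNIV. (if l = p then 1 else 0) * X p)" by (simp only: assms)
  finally show ?thesis by (simp only: delta1)
qed

lemma main_alg:
  fixes G Gi Q P H G' :: "'n::finite \<Rightarrow> 'n \<Rightarrow> real"
    and dg dH dg' \<Gamma> \<Gamma>' :: "'n \<Rightarrow> 'n \<Rightarrow> 'n \<Rightarrow> real"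
    and W \<omega> A :: "'n \<Rightarrow> real" and dW d\<omega> :: "'n \<Rightarrow> 'n \<Rightarrow> real" and \<alpha> :: real
  assumes GGi: "\<And>i j. (\<Sum>k\<in>UNIV. G i k * Gi k j) = (if i = j then 1 else 0)"
    and Gsym: "\<And>i j. G i j = G j i"
    and dgsym: "\<And>k i j. dg k i j = dg k j i"
    and Gam: "\<And>c a b. \<Gamma> c a b = 1/2 * (\<Sum>l\<in>UNIV. Gi c l * (dg a b l + dg b a l - dg l a b))"
    and dW: "\<And>k j. dW k j = - (\<Sum>l\<in>UNIV. \<Gamma> j k l * W l)"
    and om: "\<And>i. \<omega> i = (\<Sum>j\<in>UNIV. G i j * W j)"
    and dom: "\<And>k i. d\<omega> k i = (\<Sum>j\<in>UNIV. dg k i j * W j + G i j * dW k j)"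
    and H: "\<And>i j. H i j = G i j + \<omega> i * \<omega> j"
    and dH: "\<And>k i j. dH k i j = dg k i j + d\<omega> k i * \<omega> j + \<omega> i * d\<omega> k j"
    and apos: "\<alpha> > 0" and aW: "(\<Sum>j\<in>UNIV. W j * A j) = 0"
    and G': "\<And>i j. G' i j = \<alpha> * H i j"
    and dg': "\<And>k i j. dg' k i j = A k * H i j + \<alpha> * dH k i j"
    and QG: "\<And>i j. (\<Sum>k\<in>UNIV. Q i k * G' k j) = (if i = j then 1 else 0)"
    and GQ: "\<And>i j. (\<Sum>k\<in>UNIV. G' i k * Q k j) = (if i = j then 1 else 0)"
    and GP: "\<And>i j. (\<Sum>k\<in>UNIV. G' i k * P k j) = (if i = j then 1 else 0)"
    and Gam': "\<And>c a b. \<Gamma>' c a b = 1/2 * (\<Sum>l\<in>UNIV. P c l * (dg' a b l + dg' b a l - dg' l a b))"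
  shows "(\<Sum>a\<in>UNIV. \<Sum>b\<in>UNIV. (\<Gamma> c a b - \<Gamma>' c a b) * Q a b)
     = (real CARD('n) - 2) / (2 * \<alpha>^2) * (\<Sum>l\<in>UNIV. Gi c l * A l)"
proof -
  have S1: "(\<Sum>c\<in>UNIV. G l c * \<Gamma> c a b) = 1/2 * (dg a b l + dg b a l - dg l a b)" for l a b
  proof -
    have "(\<Sum>c\<in>UNIV. G l c * \<Gamma> c a b) = 1/2 * (\<Sum>c\<in>UNIV. G l c * (\<Sum>p\<in>UNIV. Gi c p * (dg a b p + dg b a p - dg p a b)))"
      by (simp only: Gam sum_distrib_left mult.left_commute[of "G l _" "1/2"])
    also have "\<dots> = 1/2 * (dg a b l + dg b a l - dg l a b)"
      by (simp only: lower[OF GGi])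
    finally show ?thesis .
  qed
  have S2: "\<Gamma> c a b = \<Gamma> c b a" for c a b
  proof -
    have "dg a b l + dg b a l - dg l a b = dg b a l + dg a b l - dg l b a" for l
      using dgsym[of l a b] by simp
    then show ?thesis by (simp only: Gam)
  qed
  have S3: "dg k i j = (\<Sum>p\<in>UNIV. \<Gamma> p k i * G p j) + (\<Sum>p\<in>UNIV. \<Gamma> p k j * G i p)" for k i j
  proof -
    have "(\<Sum>p\<in>UNIV. \<Gamma> p k i * G p j) = (\<Sum>p\<in>UNIV. G j p * \<Gamma> p k i)"
      by (rule sum.cong[OF refl]) (simp add: Gsym[of _ j])
    moreover have "(\<Sum>p\<in>UNIV. \<Gamma> p k j * G i p) = (\<Sum>p\<in>UNIV. G i p * \<Gamma> p k j)"
      by (rule sum.cong[OF refl]) simp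
    ultimately show ?thesis using S1[of j k i] S1[of i k j] dgsym[of k i j] dgsym[of i k j] dgsym[of j k i]
      by simp
  qed
  have S4: "d\<omega> k i = (\<Sum>p\<in>UNIV. \<Gamma> p k i * \<omega> p)" for k i
  proof -
    have X1: "(\<Sum>j\<in>UNIV. (\<Sum>p\<in>UNIV. \<Gamma> p k i * G p j) * W j) = (\<Sum>p\<in>UNIV. \<Gamma> p k i * \<omega> p)"
      by (simp only: swapR om sum_distrib_left mult.assoc)
    have X2: "(\<Sum>j\<in>UNIV. (\<Sum>p\<in>UNIV. \<Gamma> p k j * G i p) * W j) = (\<Sum>j\<in>UNIV. G i j * (\<Sum>l\<in>UNIV. \<Gamma> j k l * W l))"
      by (simp only: swapR sum_distrib_left mult.assoc mult.commute[of "\<Gamma> _ _ _" "G _ _"])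
    have "d\<omega> k i = (\<Sum>j\<in>UNIV. dg k i j * W j) + (\<Sum>j\<in>UNIV. G i j * dW k j)"
      by (simp only: dom sum.distrib)
    also have "\<dots> = (\<Sum>j\<in>UNIV. (\<Sum>p\<in>UNIV. \<Gamma> p k i * G p j) * W j) + (\<Sum>j\<in>UNIV. (\<Sum>p\<in>UNIV. \<Gamma> p k j * G i p) * W j)
        - (\<Sum>j\<in>UNIV. G i j * (\<Sum>l\<in>UNIV. \<Gamma> j k l * W l))"
      by (simp add: S3[of k i] dW distrib_right sum.distrib sum_negf)
    finally show ?thesis using X1 X2 by simp
  qed
  have Hsym: "H i j = H j i" for i j
    using Gsym[of i j] by (simp add: H mult.commute)
  have h1: "(\<Sum>p\<in>UNIV. \<Gamma> p k i * H p j) = (\<Sum>p\<in>UNIV. \<Gamma> p k i * G p j) + (\<Sum>p\<in>UNIV. \<Gamma> p k i * \<omega> p) * \<omega> j" for k i j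
    by (simp add: H distrib_left sum.distrib sum_distrib_right mult.assoc)
  have h2: "(\<Sum>p\<in>UNIV. \<Gamma> p k j * H i p) = (\<Sum>p\<in>UNIV. \<Gamma> p k j * G i p) + \<omega> i * (\<Sum>p\<in>UNIV. \<Gamma> p k j * \<omega> p)" for k i j
    by (simp add: H distrib_left sum.distrib sum_distrib_left mult_ac)
  have S5: "dH k i j = (\<Sum>p\<in>UNIV. \<Gamma> p k i * H p j) + (\<Sum>p\<in>UNIV. \<Gamma> p k j * H i p)" for k i j
    by (simp only: h1 h2 dH S4[symmetric] S3[of k i j])
  have S6: "(\<Sum>c\<in>UNIV. H l c * \<Gamma> c a b) = 1/2 * (dH a b l + dH b a l - dH l a b)" for l a b
  proof -
    have e1: "(\<Sum>p\<in>UNIV. \<Gamma> p a l * H b p) = (\<Sum>p\<in>UNIV. \<Gamma> p l a * H p b)"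
      by (rule sum.cong[OF refl]) (metis S2 Hsym)
    have e2: "(\<Sum>p\<in>UNIV. \<Gamma> p b a * H p l) = (\<Sum>p\<in>UNIV. \<Gamma> p a b * H p l)"
      by (rule sum.cong[OF refl]) (metis S2)
    have e3: "(\<Sum>p\<in>UNIV. \<Gamma> p b l * H a p) = (\<Sum>p\<in>UNIV. \<Gamma> p l b * H a p)"
      by (rule sum.cong[OF refl]) (metis S2)
    have e4: "(\<Sum>c\<in>UNIV. H l c * \<Gamma> c a b) = (\<Sum>p\<in>UNIV. \<Gamma> p a b * H p l)"
      by (rule sum.cong[OF refl]) (metis Hsym mult.commute)
    show ?thesis by (simp only: S5 e1 e2 e3 e4) simp
  qed
  have S7: "(\<Sum>c\<in>UNIV. G' l c * (\<Gamma> c a b - \<Gamma>' c a b)) = - 1/2 * (A a * H b l + A b * H a l - A l * H a b)" for l a b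
  proof -
    have "(\<Sum>c\<in>UNIV. G' l c * \<Gamma>' c a b) = 1/2 * (\<Sum>c\<in>UNIV. G' l c * (\<Sum>p\<in>UNIV. P c p * (dg' a b p + dg' b a p - dg' p a b)))"
      by (simp only: Gam' sum_distrib_left mult.left_commute[of "G' l _" "1/2"])
    also have "\<dots> = 1/2 * (dg' a b l + dg' b a l - dg' l a b)"
      by (simp only: lower[OF GP])
    also have "\<dots> = 1/2 * (A a * H b l + A b * H a l - A l * H a b) + \<alpha> * (1/2 * (dH a b l + dH b a l - dH l a b))"
      by (simp add: dg' algebra_simps)
    also have "\<dots> = 1/2 * (A a * H b l + A b * H a l - A l * H a b) + (\<Sum>c\<in>UNIV. G' l c * \<Gamma> c a b)"
    proof -
      have "(\<Sum>c\<in>UNIV. G' l c * \<Gamma> c a b) = \<alpha> * (\<Sum>c\<in>UNIV. H l c * \<Gamma> c a b)"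
        by (simp add: G' sum_distrib_left mult.assoc)
      then show ?thesis by (simp only: S6)
    qed
    finally show ?thesis by (simp add: right_diff_distrib sum_subtractf)
  qed
  have QH: "(\<Sum>b\<in>UNIV. Q a b * H b l) = (if a = l then 1 / \<alpha> else 0)" for a l
  proof -
    have "\<alpha> * (\<Sum>b\<in>UNIV. Q a b * H b l) = (if a = l then 1 else 0)"
      using QG[of a l] by (simp add: G' sum_distrib_left mult_ac)
    then show ?thesis using apos by (auto simp: field_simps)
  qed
  have HQ: "(\<Sum>b\<in>UNIV. Q b a * H b l) = (if a = l then 1 / \<alpha> else 0)" for a l
  proof -
    have "\<alpha> * (\<Sum>b\<in>UNIV. Q b a * H b l) = (if l = a then 1 else 0)"
      using GQ[of l a] by (simp add: G' sum_distrib_left mult_ac Hsym[of l])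
    then show ?thesis using apos by (auto simp: field_simps)
  qed
  define T where "T c = (\<Sum>a\<in>UNIV. \<Sum>b\<in>UNIV. (\<Gamma> c a b - \<Gamma>' c a b) * Q a b)" for c
  define R where "R c = (real CARD('n) - 2) / (2 * \<alpha>^2) * (\<Sum>l\<in>UNIV. Gi c l * A l)" for c
  have S8: "(\<Sum>c\<in>UNIV. G' l c * T c) = (real CARD('n) - 2) / (2 * \<alpha>) * A l" for l
  proof -
    have "(\<Sum>c\<in>UNIV. G' l c * T c) = (\<Sum>a\<in>UNIV. \<Sum>c\<in>UNIV. G' l c * (\<Sum>b\<in>UNIV. (\<Gamma> c a b - \<Gamma>' c a b) * Q a b))"
      by (simp only: T_def swapL)
    also have "\<dots> = (\<Sum>a\<in>UNIV. \<Sum>b\<in>UNIV. Q a b * (\<Sum>c\<in>UNIV. G' l c * (\<Gamma> c a b - \<Gamma>' c a b)))"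
      by (rule sum.cong[OF refl], simp only: sum_distrib_left mult_ac, rule sum.swap)
    also have "\<dots> = (\<Sum>a\<in>UNIV. \<Sum>b\<in>UNIV. - 1/2 * (A a * (Q a b * H b l) + A b * (Q a b * H a l) - A l * (Q a b * H a b)))"
      by (simp only: S7) (simp add: algebra_simps)
    also have "\<dots> = - 1/2 * ((\<Sum>a\<in>UNIV. A a * (\<Sum>b\<in>UNIV. Q a b * H b l)) + (\<Sum>b\<in>UNIV. A b * (\<Sum>a\<in>UNIV. Q a b * H a l))
          - A l * (\<Sum>a\<in>UNIV. \<Sum>b\<in>UNIV. Q a b * H a b))"
    proof -
      have r1: "(\<Sum>a\<in>UNIV. A a * (\<Sum>b\<in>UNIV. Q a b * H b l)) = (\<Sum>a\<in>UNIV. \<Sum>b\<in>UNIV. A a * (Q a b * H b l))"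
        by (simp add: sum_distrib_left)
      have r2: "(\<Sum>b\<in>UNIV. A b * (\<Sum>a\<in>UNIV. Q a b * H a l)) = (\<Sum>a\<in>UNIV. \<Sum>b\<in>UNIV. A b * (Q a b * H a l))"
        by (simp only: swapL)
      have r3: "A l * (\<Sum>a\<in>UNIV. \<Sum>b\<in>UNIV. Q a b * H a b) = (\<Sum>a\<in>UNIV. \<Sum>b\<in>UNIV. A l * (Q a b * H a b))"
        by (simp add: sum_distrib_left)
      show ?thesis unfolding r1 r2 r3
        by (simp only: sum.distrib sum_subtractf right_diff_distrib distrib_left sum_distrib_left)
    qed
    also have "(\<Sum>a\<in>UNIV. \<Sum>b\<in>UNIV. Q a b * H a b) = (\<Sum>a\<in>UNIV. \<Sum>b\<in>UNIV. Q a b * H b a)"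
      by (simp add: Hsym)
    also have "\<dots> = real CARD('n) / \<alpha>"
      by (simp add: QH)
    also have "(\<Sum>a\<in>UNIV. A a * (\<Sum>b\<in>UNIV. Q a b * H b l)) = A l / \<alpha>"
      by (simp add: QH if_distrib cong: if_cong)
    also have "(\<Sum>b\<in>UNIV. A b * (\<Sum>a\<in>UNIV. Q a b * H a l)) = A l / \<alpha>"
      by (simp add: HQ if_distrib cong: if_cong)
    finally show ?thesis using apos by (simp add: field_simps)
  qed
  have S9: "(\<Sum>c\<in>UNIV. G' l c * R c) = (real CARD('n) - 2) / (2 * \<alpha>) * A l" for l
  proof -
    have z: "(\<Sum>c\<in>UNIV. \<omega> c * (\<Sum>p\<in>UNIV. Gi c p * A p)) = 0"
    proof -
      have "(\<Sum>c\<in>UNIV. \<omega> c * (\<Sum>p\<in>UNIV. Gi c p * A p)) = (\<Sum>j\<in>UNIV. \<Sum>c\<in>UNIV. G c j * W j * (\<Sum>p\<in>UNIV. Gi c p * A p))"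
        by (simp only: om swapR)
      also have "\<dots> = (\<Sum>j\<in>UNIV. W j * (\<Sum>c\<in>UNIV. G j c * (\<Sum>p\<in>UNIV. Gi c p * A p)))"
      proof (rule sum.cong[OF refl])
        fix j
        show "(\<Sum>c\<in>UNIV. G c j * W j * (\<Sum>p\<in>UNIV. Gi c p * A p)) = W j * (\<Sum>c\<in>UNIV. G j c * (\<Sum>p\<in>UNIV. Gi c p * A p))"
          by (simp add: sum_distrib_left mult_ac Gsym[of j])
      qed
      also have "\<dots> = (\<Sum>j\<in>UNIV. W j * A j)"
        by (simp only: lower[OF GGi])
      finally show ?thesis using aW by simp
    qed
    have "(\<Sum>c\<in>UNIV. H l c * (\<Sum>p\<in>UNIV. Gi c p * A p)) = (\<Sum>c\<in>UNIV. G l c * (\<Sum>p\<in>UNIV. Gi c p * A p)) + \<omega> l * (\<Sum>c\<in>UNIV. \<omega> c * (\<Sum>p\<in>UNIV. Gi c p * A p))"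
      by (simp add: H distrib_left distrib_right sum.distrib sum_distrib_left mult_ac)
    also have "\<dots> = A l" by (simp only: lower[OF GGi] z mult_zero_right add_0_right)
    finally have "(\<Sum>c\<in>UNIV. H l c * (\<Sum>p\<in>UNIV. Gi c p * A p)) = A l" .
    moreover have "(\<Sum>c\<in>UNIV. G' l c * R c) = (\<Sum>c\<in>UNIV. (\<alpha> * ((real CARD('n) - 2) / (2 * \<alpha>^2))) * (H l c * (\<Sum>p\<in>UNIV. Gi c p * A p)))"
      by (rule sum.cong[OF refl]) (simp add: R_def G' mult_ac)
    ultimately have "(\<Sum>c\<in>UNIV. G' l c * R c) = \<alpha> * ((real CARD('n) - 2) / (2 * \<alpha>^2)) * A l"
      by (simp only: sum_distrib_left[symmetric])
    moreover have "\<alpha> * ((real CARD('n) - 2) / (2 * \<alpha>^2)) = (real CARD('n) - 2) / (2 * \<alpha>)"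
      using apos by (simp add: power2_eq_square)
    ultimately show ?thesis by (simp only:)
  qed
  have "T c = (\<Sum>l\<in>UNIV. Q c l * (\<Sum>k\<in>UNIV. G' l k * T k))"
    by (simp only: lower[OF QG])
  also have "\<dots> = (\<Sum>l\<in>UNIV. Q c l * (\<Sum>k\<in>UNIV. G' l k * R k))"
    by (simp only: S8 S9)
  also have "\<dots> = R c"
    by (simp only: lower[OF QG])
  finally show ?thesis by (simp only: T_def R_def)
qed



lemma pd_add:
  assumes "f differentiable (at x)" "h differentiable (at x)"
  shows "pd k (\<lambda>y. f y + h y) x = pd k f x + pd k h x"
proof -
  have "((\<lambda>y. f y + h y) has_derivative (\<lambda>v. frechet_derivative f (at x) v + frechet_derivative h (at x) v)) (at x)"
    using assms by (intro has_derivative_add) (simp_all add: frechet_derivative_works[symmetric])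
  from frechet_derivative_at[OF this] show ?thesis unfolding pd_def by metis
qed

lemma pd_mult:
  assumes "f differentiable (at x)" "h differentiable (at x)"
  shows "pd k (\<lambda>y. f y * h y) x = f x * pd k h x + pd k f x * h x"
proof -
  have "((\<lambda>y. f y * h y) has_derivative (\<lambda>v. f x * frechet_derivative h (at x) v + frechet_derivative f (at x) v * h x)) (at x)"
    using assms by (intro has_derivative_mult) (simp_all add: frechet_derivative_works[symmetric])
  from frechet_derivative_at[OF this] show ?thesis unfolding pd_def by metis
qed

lemma pd_sum:
  assumes "\<And>i. f i differentiable (at x)"
  shows "pd k (\<lambda>y. \<Sum>i\<in>(UNIV::'m::finite set). f i y) x = (\<Sum>i\<in>UNIV. pd k (f i) x)"
proof -
  have "((\<lambda>y. \<Sum>i\<in>(UNIV::'m set). f i y) has_derivative (\<lambda>v. \<Sum>i\<in>UNIV. frechet_derivative (f i) (at x) v)) (at x)"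
    using assms by (intro has_derivative_sum) (simp_all add: frechet_derivative_works[symmetric])
  from frechet_derivative_at[OF this] show ?thesis unfolding pd_def by metis
qed

lemma pd_nth: fixes k c :: "'n::finite" and x :: "real^'n"
  shows "pd k (\<lambda>y. y $ c) x = (if k = c then 1 else 0)"
proof -
  have hd: "((\<lambda>y::real^'n. y $ c) has_derivative (\<lambda>y. y $ c)) (at x)"
    by (rule bounded_linear_imp_has_derivative) (rule bounded_linear_vec_nth)
  have "frechet_derivative (\<lambda>y::real^'n. y $ c) (at x) = (\<lambda>y. y $ c)"
    using frechet_derivative_at[OF hd] by simp
  then show ?thesis unfolding pd_def axis_def by auto
qed

lemma pd_local:
  assumes "f differentiable (at x)" "open U" "x \<in> U" "\<And>y. y \<in> U \<Longrightarrow> f y = h y"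
  shows "pd k f x = pd k h x"
  unfolding pd_def using frechet_derivative_transform_within_open[OF assms] by simp

lemma smooth_diff: "smooth_fn U f \<Longrightarrow> x \<in> U \<Longrightarrow> f differentiable (at x)"
  by (erule smooth_fn.cases) auto

lemma dphi_id: "dphi id y v = v"
proof -
  have "dphi id y v $ c = v $ c" for c
  proof -
    have "dphi id y v $ c = (\<Sum>k\<in>UNIV. v $ k * (if k = c then 1 else 0))"
      unfolding dphi_def by (simp add: pd_nth)
    then show ?thesis by (simp only: delta2)
  qed
  then show ?thesis by (simp add: vec_eq_iff)
qed

lemma tension_id:
  "tension g' h id e x $ c = (\<Sum>a\<in>UNIV. \<Sum>b\<in>UNIV. (christoffel h x c a b - christoffel g' x c a b) * (\<Sum>i\<in>UNIV. e i x $ a * e i x $ b))"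
proof -
  have "tension g' h id e x $ c = (\<Sum>i\<in>UNIV. \<Sum>a\<in>UNIV. \<Sum>b\<in>UNIV. (christoffel h x c a b - christoffel g' x c a b) * (e i x $ a * e i x $ b))"
    unfolding tension_def cov_pull_def cov_def
    by (simp add: dphi_id sum_subtractf sum.distrib algebra_simps)
  also have "\<dots> = (\<Sum>a\<in>UNIV. \<Sum>i\<in>UNIV. \<Sum>b\<in>UNIV. (christoffel h x c a b - christoffel g' x c a b) * (e i x $ a * e i x $ b))"
    by (rule sum.swap)
  also have "\<dots> = (\<Sum>a\<in>UNIV. \<Sum>b\<in>UNIV. \<Sum>i\<in>UNIV. (christoffel h x c a b - christoffel g' x c a b) * (e i x $ a * e i x $ b))"
    by (rule sum.cong[OF refl]) (rule sum.swap)
  also have "\<dots> = (\<Sum>a\<in>UNIV. \<Sum>b\<in>UNIV. (christoffel h x c a b - christoffel g' x c a b) * (\<Sum>i\<in>UNIV. e i x $ a * e i x $ b))"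
    by (simp only: sum_distrib_left)
  finally show ?thesis .
qed

lemma W_alg:
  fixes F dF :: "'n::finite \<Rightarrow> 'n \<Rightarrow> _" and \<Gamma> :: "'n \<Rightarrow> 'n \<Rightarrow> 'n \<Rightarrow> real"
  assumes dW: "dW = (\<Sum>l\<in>UNIV. F j l * dV l + dF j l * V l)"
    and dV: "\<And>l. dV l = - (\<Sum>p\<in>UNIV. \<Gamma> l k p * V p)"
    and dF: "\<And>j l. dF j l = (\<Sum>p\<in>UNIV. \<Gamma> p k l * F j p) - (\<Sum>p\<in>UNIV. \<Gamma> j k p * F p l)"
    and W: "\<And>p. W p = (\<Sum>l\<in>UNIV. F p l * V l)"
  shows "dW = - (\<Sum>p\<in>UNIV. \<Gamma> j k p * W p)"
proof -
  have t1: "(\<Sum>l\<in>UNIV. F j l * dV l) = - (\<Sum>l\<in>UNIV. \<Sum>p\<in>UNIV. F j l * (\<Gamma> l k p * V p))"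
    by (simp add: dV sum_distrib_left sum_negf)
  have t2: "(\<Sum>l\<in>UNIV. (\<Sum>p\<in>UNIV. \<Gamma> p k l * F j p) * V l) = (\<Sum>l\<in>UNIV. \<Sum>p\<in>UNIV. F j l * (\<Gamma> l k p * V p))"
    by (subst swapR) (simp add: mult_ac)
  have t3: "(\<Sum>l\<in>UNIV. (\<Sum>p\<in>UNIV. \<Gamma> j k p * F p l) * V l) = (\<Sum>p\<in>UNIV. \<Gamma> j k p * W p)"
    by (simp only: swapR W sum_distrib_left mult.assoc)
  have "dW = (\<Sum>l\<in>UNIV. F j l * dV l) + (\<Sum>l\<in>UNIV. (\<Sum>p\<in>UNIV. \<Gamma> p k l * F j p) * V l)
      - (\<Sum>l\<in>UNIV. (\<Sum>p\<in>UNIV. \<Gamma> j k p * F p l) * V l)"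
    by (simp add: dW dF sum.distrib left_diff_distrib sum_subtractf)
  then show ?thesis by (simp only: t1 t2 t3)
qed



lemma mm_idx: "(A::real^'n^'n) ** B = mat 1 \<Longrightarrow> (\<Sum>k\<in>UNIV. A$i$k * B$k$j) = (if i = j then 1 else 0)"
  by (drule arg_cong[where f="\<lambda>M. M$i$j"]) (simp add: matrix_matrix_mult_def mat_def)

lemma axis_sum: "(\<Sum>i\<in>UNIV. axis k (1::real) $ i * f i) = f k"
proof -
  have "(\<Sum>i\<in>UNIV. axis k (1::real) $ i * f i) = (\<Sum>i\<in>UNIV. if i = k then f i else 0)"
    by (rule sum.cong) (auto simp: axis_def)
  then show ?thesis by simp
qed

lemma cov_axis: "cov g (\<lambda>_. axis k 1) V x $ l = pd k (\<lambda>y. V y $ l) x + (\<Sum>j\<in>UNIV. christoffel g x l k j * V x $ j)"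
proof -
  have "(\<Sum>i\<in>UNIV. \<Sum>j\<in>UNIV. christoffel g x l i j * axis k 1 $ i * V x $ j)
      = (\<Sum>i\<in>UNIV. axis k 1 $ i * (\<Sum>j\<in>UNIV. christoffel g x l i j * V x $ j))"
    by (rule sum.cong[OF refl]) (simp add: sum_distrib_left mult_ac)
  then show ?thesis unfolding cov_def by (simp only: vec_lambda_beta axis_sum)
qed

lemma inv_of_invertible:
  assumes "invertible (A::real^'n^'n)"
  shows "A ** matrix_inv A = mat 1 \<and> matrix_inv A ** A = mat 1"
proof -
  have "\<exists>A'. A ** A' = mat 1 \<and> A' ** A = mat 1" using assms unfolding invertible_def .
  then show ?thesis unfolding matrix_inv_def by (rule someI_ex)
qed

theorem theorem4p2:
  fixes U :: "(real^'n::finite) set" and m :: nat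
    and F g :: "real^'n \<Rightarrow> real^'n^'n" and V :: "real^'n \<Rightarrow> real^'n"
    and \<alpha> :: "real^'n \<Rightarrow> real" and e :: "'n \<Rightarrow> real^'n \<Rightarrow> real^'n" and x :: "real^'n"
  assumes "para_kaehler_norden m U F g"
    and "smooth_vf U V" and "\<forall>y\<in>U. V y \<bullet> (g y *v V y) = 1" and "parallel_vf U g V"
    and "smooth_fn U \<alpha>" and "\<forall>y\<in>U. \<alpha> y > 0"
    and "\<forall>y\<in>U. dir_deriv (\<lambda>z. F z *v V z) \<alpha> y = 0"
    and "orthonormal_frame U (g_alpha g F V \<alpha>) e"
    and "x \<in> U"
  shows "tension (g_alpha g F V \<alpha>) g id e x = ((real m - 1) / (\<alpha> x)\<^sup>2) *\<^sub>R grad g \<alpha> x"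
proof -
  note xU = assms(9)
  from assms(1) have n2m: "CARD('n) = 2*m" and rm: "riem_metric U g" and sF: "smooth_tf U F"
      and ptf: "parallel_tf U g F"
    unfolding para_kaehler_norden_def by auto
  from rm have oU: "open U" and sg: "smooth_tf U g" and gsymU: "\<forall>y\<in>U. transpose (g y) = g y"
      and gpos: "\<forall>v. v \<noteq> 0 \<longrightarrow> v \<bullet> (g x *v v) > 0"
    unfolding riem_metric_def using xU by auto
  have dg_d: "(\<lambda>y. g y $ i $ j) differentiable (at x)" for i j
    using sg xU unfolding smooth_tf_def by (blast intro: smooth_diff)
  have dF_d: "(\<lambda>y. F y $ i $ j) differentiable (at x)" for i j
    using sF xU unfolding smooth_tf_def by (blast intro: smooth_diff)
  have dV_d: "(\<lambda>y. V y $ i) differentiable (at x)" for i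
    using assms(2) xU unfolding smooth_vf_def by (blast intro: smooth_diff)
  have da_d: "\<alpha> differentiable (at x)"
    using assms(5) xU by (blast intro: smooth_diff)
  have apos: "\<alpha> x > 0" using assms(6) xU by auto
  have "inj ((*v) (g x))"
  proof (rule injI)
    fix v w assume "g x *v v = g x *v w"
    then have "g x *v (v - w) = 0" by (simp add: matrix_vector_mult_diff_distrib)
    then show "v = w" using gpos[rule_format, of "v - w"] by force
  qed
  then obtain B where "B ** g x = mat 1" using matrix_left_invertible_injective by blast
  then have "invertible (g x)" using invertible_left_inverse by blast
  from inv_of_invertible[OF this] have gGi: "g x ** matrix_inv (g x) = mat 1" by simp
  define g' where "g' = g_alpha g F V \<alpha>"
  define E :: "real^'n^'n" where "E = (\<chi> a i. e i x $ a)"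
  have on: "e i x \<bullet> (g' x *v e j x) = (if i = j then 1 else 0)" for i j
    using assms(8) xU unfolding orthonormal_frame_def g'_def by blast
  have "(transpose E ** g' x ** E) $ i $ j = e i x \<bullet> (g' x *v e j x)" for i j
    unfolding matrix_matrix_mult_def transpose_def inner_vec_def matrix_vector_mult_def E_def
    by (simp add: sum_distrib_left sum_distrib_right mult_ac) (rule sum.swap)
  then have "transpose E ** g' x ** E = mat 1"
    by (simp add: on vec_eq_iff mat_def)
  then have "E ** (transpose E ** g' x) = mat 1"
    using matrix_left_right_inverse by (metis matrix_mul_assoc)
  then have QMG: "(E ** transpose E) ** g' x = mat 1" by (simp add: matrix_mul_assoc)
  then have GQM: "g' x ** (E ** transpose E) = mat 1" using matrix_left_right_inverse by blast
  have QM: "(E ** transpose E) $ a $ b = (\<Sum>i\<in>UNIV. e i x $ a * e i x $ b)" for a b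
    by (simp add: matrix_matrix_mult_def transpose_def E_def)
  have "invertible (g' x)" unfolding invertible_def using QMG GQM by blast
  from inv_of_invertible[OF this] have gP: "g' x ** matrix_inv (g' x) = mat 1" by simp
  define Wf where "Wf = (\<lambda>j y. \<Sum>l\<in>UNIV. F y $ j $ l * V y $ l)"
  define \<omega>f where "\<omega>f = (\<lambda>i y. \<Sum>j\<in>UNIV. g y $ i $ j * Wf j y)"
  define Hf where "Hf = (\<lambda>i j y. g y $ i $ j + \<omega>f i y * \<omega>f j y)"
  have g'e: "g' y $ i $ j = \<alpha> y * Hf i j y" for y i j
    by (simp add: g'_def g_alpha_def Hf_def \<omega>f_def Wf_def matrix_vector_mult_def)
  have W_d: "Wf j differentiable (at x)" for j
    unfolding Wf_def using dF_d dV_d by (intro derivative_intros) auto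
  have om_d: "\<omega>f i differentiable (at x)" for i
    unfolding \<omega>f_def using dg_d W_d by (intro derivative_intros) auto
  have H_d: "Hf i j differentiable (at x)" for i j
    unfolding Hf_def using dg_d om_d by (intro derivative_intros) auto
  have dWf: "pd k (Wf j) x = (\<Sum>l\<in>UNIV. F x $ j $ l * pd k (\<lambda>y. V y $ l) x + pd k (\<lambda>y. F y $ j $ l) x * V x $ l)" for k j
    unfolding Wf_def using dF_d dV_d by (simp add: pd_sum pd_mult)
  have d\<omega>f: "pd k (\<omega>f i) x = (\<Sum>j\<in>UNIV. pd k (\<lambda>y. g y $ i $ j) x * Wf j x + g x $ i $ j * pd k (Wf j) x)" for k i
  proof -
    have "pd k (\<omega>f i) x = (\<Sum>j\<in>UNIV. pd k (\<lambda>y. g y $ i $ j * Wf j y) x)"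
      unfolding \<omega>f_def using dg_d W_d by (simp add: pd_sum)
    also have "\<dots> = (\<Sum>j\<in>UNIV. pd k (\<lambda>y. g y $ i $ j) x * Wf j x + g x $ i $ j * pd k (Wf j) x)"
      by (rule sum.cong[OF refl]) (simp add: pd_mult[OF dg_d W_d])
    finally show ?thesis .
  qed
  have dHf: "pd k (Hf i j) x = pd k (\<lambda>y. g y $ i $ j) x + pd k (\<omega>f i) x * \<omega>f j x + \<omega>f i x * pd k (\<omega>f j) x" for k i j
  proof -
    have "pd k (Hf i j) x = pd k (\<lambda>y. g y $ i $ j) x + pd k (\<lambda>y. \<omega>f i y * \<omega>f j y) x"
      unfolding Hf_def using dg_d om_d by (simp add: pd_add)
    then show ?thesis by (simp add: pd_mult[OF om_d om_d])
  qed
  have dg'e: "pd k (\<lambda>y. g' y $ i $ j) x = pd k \<alpha> x * Hf i j x + \<alpha> x * pd k (Hf i j) x" for k i j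
  proof -
    have "(\<lambda>y. g' y $ i $ j) = (\<lambda>y. \<alpha> y * Hf i j y)" by (simp add: g'e)
    then show ?thesis by (simp add: pd_mult[OF da_d H_d])
  qed
  have dVp: "pd k (\<lambda>y. V y $ l) x = - (\<Sum>p\<in>UNIV. christoffel g x l k p * V x $ p)" for k l
  proof -
    have "cov g (\<lambda>_. axis k 1) V x $ l = 0" using assms(4) xU unfolding parallel_vf_def by simp
    then show ?thesis by (simp add: cov_axis eq_neg_iff_add_eq_0)
  qed
  have dFp: "pd k (\<lambda>y. F y $ j $ l) x = (\<Sum>p\<in>UNIV. christoffel g x p k l * F x $ j $ p) - (\<Sum>p\<in>UNIV. christoffel g x j k p * F x $ p $ l)" for k j l
    using ptf xU unfolding parallel_tf_def by (simp add: algebra_simps)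
  have dWp: "pd k (Wf j) x = - (\<Sum>p\<in>UNIV. christoffel g x j k p * Wf p x)" for k j
    by (rule W_alg[where F="\<lambda>j l. F x $ j $ l" and V="\<lambda>l. V x $ l" and dV="\<lambda>l. pd k (\<lambda>y. V y $ l) x"
          and dF="\<lambda>j l. pd k (\<lambda>y. F y $ j $ l) x"], rule dWf, rule dVp, rule dFp) (simp add: Wf_def)
  have Gsym: "g x $ i $ j = g x $ j $ i" for i j
  proof -
    have "transpose (g x) $ j $ i = g x $ j $ i" using gsymU xU by simp
    then show ?thesis by (simp add: transpose_def)
  qed
  have dgsym: "pd k (\<lambda>y. g y $ i $ j) x = pd k (\<lambda>y. g y $ j $ i) x" for k i j
  proof (rule pd_local[OF dg_d oU xU])
    fix y assume "y \<in> U"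
    then have "transpose (g y) $ j $ i = g y $ j $ i" using gsymU by simp
    then show "g y $ i $ j = g y $ j $ i" by (simp add: transpose_def)
  qed
  have aW: "(\<Sum>j\<in>UNIV. Wf j x * pd j \<alpha> x) = 0"
    using assms(7) xU unfolding dir_deriv_def by (simp add: Wf_def matrix_vector_mult_def)
  have key: "(\<Sum>a\<in>UNIV. \<Sum>b\<in>UNIV. (christoffel g x c a b - christoffel g' x c a b) * (E ** transpose E) $ a $ b)
     = (real CARD('n) - 2) / (2 * (\<alpha> x)^2) * (\<Sum>l\<in>UNIV. matrix_inv (g x) $ c $ l * pd l \<alpha> x)" for c
  proof (rule main_alg[where G="\<lambda>i j. g x $ i $ j" and dg="\<lambda>k i j. pd k (\<lambda>y. g y $ i $ j) x"
       and W="\<lambda>j. Wf j x" and dW="\<lambda>k j. pd k (Wf j) x" and \<omega>="\<lambda>i. \<omega>f i x" and d\<omega>="\<lambda>k i. pd k (\<omega>f i) x"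
       and H="\<lambda>i j. Hf i j x" and dH="\<lambda>k i j. pd k (Hf i j) x" and G'="\<lambda>i j. g' x $ i $ j"
       and dg'="\<lambda>k i j. pd k (\<lambda>y. g' y $ i $ j) x" and P="\<lambda>i j. matrix_inv (g' x) $ i $ j"])
    show "\<And>i j. (\<Sum>k\<in>UNIV. g x $ i $ k * matrix_inv (g x) $ k $ j) = (if i = j then 1 else 0)"
      by (rule mm_idx[OF gGi])
    show "\<And>i j. g x $ i $ j = g x $ j $ i" by (rule Gsym)
    show "\<And>k i j. pd k (\<lambda>y. g y $ i $ j) x = pd k (\<lambda>y. g y $ j $ i) x" by (rule dgsym)
    show "\<And>c a b. christoffel g x c a b = 1/2 * (\<Sum>l\<in>UNIV. matrix_inv (g x) $ c $ l *
        (pd a (\<lambda>y. g y $ b $ l) x + pd b (\<lambda>y. g y $ a $ l) x - pd l (\<lambda>y. g y $ a $ b) x))"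
      by (simp add: christoffel_def)
    show "\<And>k j. pd k (Wf j) x = - (\<Sum>l\<in>UNIV. christoffel g x j k l * Wf l x)" by (rule dWp)
    show "\<And>i. \<omega>f i x = (\<Sum>j\<in>UNIV. g x $ i $ j * Wf j x)" by (simp add: \<omega>f_def)
    show "\<And>k i. pd k (\<omega>f i) x = (\<Sum>j\<in>UNIV. pd k (\<lambda>y. g y $ i $ j) x * Wf j x + g x $ i $ j * pd k (Wf j) x)"
      by (rule d\<omega>f)
    show "\<And>i j. Hf i j x = g x $ i $ j + \<omega>f i x * \<omega>f j x" by (simp add: Hf_def)
    show "\<And>k i j. pd k (Hf i j) x = pd k (\<lambda>y. g y $ i $ j) x + pd k (\<omega>f i) x * \<omega>f j x + \<omega>f i x * pd k (\<omega>f j) x"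
      by (rule dHf)
    show "0 < \<alpha> x" by (rule apos)
    show "(\<Sum>j\<in>UNIV. Wf j x * pd j \<alpha> x) = 0" by (rule aW)
    show "\<And>i j. g' x $ i $ j = \<alpha> x * Hf i j x" by (rule g'e)
    show "\<And>k i j. pd k (\<lambda>y. g' y $ i $ j) x = pd k \<alpha> x * Hf i j x + \<alpha> x * pd k (Hf i j) x" by (rule dg'e)
    show "\<And>i j. (\<Sum>k\<in>UNIV. (E ** transpose E) $ i $ k * g' x $ k $ j) = (if i = j then 1 else 0)"
      by (rule mm_idx[OF QMG])
    show "\<And>i j. (\<Sum>k\<in>UNIV. g' x $ i $ k * (E ** transpose E) $ k $ j) = (if i = j then 1 else 0)"
      by (rule mm_idx[OF GQM])
    show "\<And>i j. (\<Sum>k\<in>UNIV. g' x $ i $ k * matrix_inv (g' x) $ k $ j) = (if i = j then 1 else 0)"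
      by (rule mm_idx[OF gP])
    show "\<And>c a b. christoffel g' x c a b = 1/2 * (\<Sum>l\<in>UNIV. matrix_inv (g' x) $ c $ l *
        (pd a (\<lambda>y. g' y $ b $ l) x + pd b (\<lambda>y. g' y $ a $ l) x - pd l (\<lambda>y. g' y $ a $ b) x))"
      by (simp add: christoffel_def)
  qed
  have "tension g' g id e x $ c = ((real m - 1) / (\<alpha> x)\<^sup>2) * grad g \<alpha> x $ c" for c
  proof -
    have "tension g' g id e x $ c = (\<Sum>a\<in>UNIV. \<Sum>b\<in>UNIV. (christoffel g x c a b - christoffel g' x c a b) * (E ** transpose E) $ a $ b)"
      by (simp only: tension_id QM)
    also have "\<dots> = (real CARD('n) - 2) / (2 * (\<alpha> x)^2) * grad g \<alpha> x $ c"
      by (simp only: key grad_def vec_lambda_beta)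
    also have "(real CARD('n) - 2) / (2 * (\<alpha> x)^2) = (real m - 1) / (\<alpha> x)\<^sup>2"
    proof -
      have eq: "real CARD('n) - 2 = 2 * (real m - 1)" using n2m by simp
      have c: "(2 * (real m - 1)) / (2 * (\<alpha> x)^2) = (real m - 1) / (\<alpha> x)^2"
        by (rule mult_divide_mult_cancel_left) simp
      show ?thesis using eq c by (simp only:)
    qed
    finally show ?thesis .
  qed
  then show ?thesis unfolding g'_def by (simp add: vec_eq_iff)
qed


end
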